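(* For $i=1,2$ let $\mathcal{G}_i$ be an $r_i$-regular graph with $n_i$ vertices, and let $\nu_{11},\ldots,\nu_{1n_1}$ be the signless Laplacian eigenvalues of $\mathcal{G}_1$. Then $\mathcal{G}_1\circledast\mathcal{G}_2$ is signless Laplacian integral if and only if $\mathcal{G}_2$ is signless Laplacian integral and, for each $i=1,2,\ldots,n_1$, the roots of $x-n_2-n_2\nu_{1i}-n_2\chi_{Q_{\mathcal{G}_2}}(x-n_2)$ are integers.
   Context: All graphs are simple, finite and undirected. $Q_{\mathcal{G}}=D_{\mathcal{G}}+A_{\mathcal{G}}$ is the signless Laplacian matrix (degree matrix plus adjacency matrix). A graph is signless Laplacian integral if all eigenvalues of its signless Laplacian matrix are integers. The signless Laplacian coronal of a graph $\mathcal{G}$ on $n$ vertices is the rational function $\chi_{Q_{\mathcal{G}}}(x)=\mathbf{1}_n^T(xI_n-Q_{\mathcal{G}})^{-1}\mathbf{1}_n$, $\mathbf{1}_n$ the all-ones vector; "roots" of the expression in the claim are the values of $x$ at which this rational function vanishes. The graph product $\mathcal{G}_1\circledast\mathcal{G}_2$ of $\mathcal{G}_1$ (vertices $u_1,\ldots,u_{n_1}$) and $\mathcal{G}_2$ (vertices $v_1,\ldots,v_{n_2}$) has vertex set $\{a_{ik},b_{ik}:1\le i\le n_1,1\le k\le n_2\}$ and edges: $a_{ik}a_{jl}$ for all $k,l$ whenever $u_iu_j\in E(\mathcal{G}_1)$; $b_{ri}b_{rj}$ for all $r$ whenever $v_iv_j\in E(\mathcal{G}_2)$; $a_{ip}b_{iq}$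 for all $i,p,q$. *)

theory Defs
  imports "HOL-Analysis.Analysis"
begin

definition simple_graph :: "('v::finite \<Rightarrow> 'v \<Rightarrow> bool) \<Rightarrow> bool" where
  "simple_graph E \<longleftrightarrow> (\<forall>u v. E u v \<longleftrightarrow> E v u) \<and> (\<forall>v. \<not> E v v)"

definition regular :: "('v::finite \<Rightarrow> 'v \<Rightarrow> bool) \<Rightarrow> nat \<Rightarrow> bool" where
  "regular E r \<longleftrightarrow> (\<forall>v. card {u. E v u} = r)"

definition sl_matrix :: "('v::finite \<Rightarrow> 'v \<Rightarrow> bool) \<Rightarrow> complex^'v^'v" where
  "sl_matrix E = (\<chi> i j. (if i = j then of_nat (card {k. E i k}) else 0) + (if E i j then 1 else 0))"

definition is_eigenvalue :: "complex^'n^'n \<Rightarrow> complex \<Rightarrow> bool" where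
  "is_eigenvalue A l \<longleftrightarrow> (\<exists>v. v \<noteq> 0 \<and> A *v v = l *s v)"

definition sl_integral :: "('v::finite \<Rightarrow> 'v \<Rightarrow> bool) \<Rightarrow> bool" where
  "sl_integral E \<longleftrightarrow> (\<forall>l. is_eigenvalue (sl_matrix E) l \<longrightarrow> l \<in> \<int>)"

text \<open>Coronal 1^T (xI - A)^{-1} 1 (meaningful wherever xI - A is invertible;
  it is a rational function of x).\<close>
definition coronal :: "complex^'n^'n \<Rightarrow> complex \<Rightarrow> complex" where
  "coronal A x = (\<Sum>i\<in>UNIV. \<Sum>j\<in>UNIV. matrix_inv ((\<chi> a b. if a = b then x else 0) - A) $ i $ j)"

text \<open>A root of a rational function f (given by its values off a finite set of poles):
  a point where the (reduced) rational function vanishes, i.e. f tends to 0 there.\<close>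
definition rat_root :: "(complex \<Rightarrow> complex) \<Rightarrow> complex \<Rightarrow> bool" where
  "rat_root f x \<longleftrightarrow> (f \<longlongrightarrow> 0) (at x)"

text \<open>The product G1 \<circledast> G2: Inl (i,k) = a_{ik}, Inr (i,k) = b_{ik}.\<close>
fun prod_graph :: "('a \<Rightarrow> 'a \<Rightarrow> bool) \<Rightarrow> ('b \<Rightarrow> 'b \<Rightarrow> bool) \<Rightarrow>
    ('a \<times> 'b) + ('a \<times> 'b) \<Rightarrow> ('a \<times> 'b) + ('a \<times> 'b) \<Rightarrow> bool" where
  "prod_graph E1 E2 (Inl (i, k)) (Inl (j, l)) = E1 i j"
| "prod_graph E1 E2 (Inr (r, i)) (Inr (s, j)) = (r = s \<and> E2 i j)"
| "prod_graph E1 E2 (Inl (i, p)) (Inr (j, q)) = (i = j)"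
| "prod_graph E1 E2 (Inr (j, q)) (Inl (i, p)) = (i = j)"

end

theory Submission
  imports Defs
begin

lemma sl_mult:
  "(sl_matrix E *v v) $ u = of_nat (card {k. E u k}) * v$u + (\<Sum>w\<in>UNIV. if E u w then v$w else 0)"
proof -
  have "(sl_matrix E *v v) $ u = (\<Sum>w\<in>UNIV. (if u = w then of_nat (card {k. E u k}) * v$w else 0) + (if E u w then v$w else 0))"
    unfolding sl_matrix_def matrix_vector_mult_def by (auto intro!: sum.cong simp: ring_distribs)
  also have "\<dots> = of_nat (card {k. E u k}) * v$u + (\<Sum>w\<in>UNIV. if E u w then v$w else 0)"
    by (simp add: sum.distrib)
  finally show ?thesis .
qed

lemma card_sum: "(of_nat (card {k. P k}) :: complex) = (\<Sum>w\<in>(UNIV::'v::finite set). if P w then 1 else 0)"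
  by (simp add: sum.If_cases)

lemma sum_plus_UNIV: "(\<Sum>w\<in>(UNIV::('x::finite + 'y::finite) set). f w) = (\<Sum>x\<in>UNIV. f (Inl x)) + (\<Sum>y\<in>UNIV. f (Inr y))"
proof -
  have e: "(UNIV::('x + 'y) set) = range Inl \<union> range Inr" by (metis UNIV_Plus_UNIV Plus_def)
  have "(\<Sum>w\<in>UNIV. f w) = (\<Sum>w\<in>range Inl \<union> range Inr. f w)" by (subst e[symmetric]) (rule refl)
  also have "\<dots> = (\<Sum>w\<in>range Inl. f w) + (\<Sum>w\<in>range Inr. f w)"
    by (rule sum.union_disjoint) auto
  finally show ?thesis by (simp add: sum.reindex)
qed

lemma sum_prod_UNIV: "(\<Sum>p\<in>(UNIV::('x::finite \<times> 'y::finite) set). f p) = (\<Sum>x\<in>UNIV. \<Sum>y\<in>UNIV. f (x,y))"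
  by (simp add: sum.cartesian_product UNIV_Times_UNIV[symmetric] del: UNIV_Times_UNIV)

lemma eventually_not_Ints: "eventually (\<lambda>y::complex. y \<notin> \<int>) (at x)"
proof -
  have "closed (\<int> - {x})" by (rule closed_subset_Ints) auto
  then have "eventually (\<lambda>y. y \<in> UNIV - (\<int> - {x})) (nhds x)"
    by (intro eventually_nhds_in_open) (auto simp: open_Diff)
  then show ?thesis unfolding eventually_at_filter by (rule eventually_mono) auto
qed

lemma reg_mult:
  assumes "regular E r"
  shows "(sl_matrix E *v v) $ u = of_nat r * v$u + (\<Sum>w\<in>UNIV. if E u w then v$w else 0)"
  using assms by (simp add: sl_mult regular_def)

lemma sym_sum:
  fixes E :: "'v::finite \<Rightarrow> 'v \<Rightarrow> bool" and z :: "'v \<Rightarrow> complex"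
  assumes "simple_graph E" "regular E r"
  shows "(\<Sum>k\<in>UNIV. \<Sum>l\<in>UNIV. if E k l then z l else 0) = of_nat r * (\<Sum>l\<in>UNIV. z l)"
proof -
  have "(\<Sum>k\<in>UNIV. \<Sum>l\<in>UNIV. if E k l then z l else 0) = (\<Sum>l\<in>UNIV. \<Sum>k\<in>UNIV. if E k l then z l else 0)"
    by (rule sum.swap)
  also have "\<dots> = (\<Sum>l\<in>UNIV. z l * of_nat (card {k. E l k}))"
  proof (rule sum.cong)
    fix l
    have "(\<Sum>k\<in>UNIV. if E k l then z l else 0) = (\<Sum>k\<in>UNIV. z l * (if E l k then 1 else 0))"
      using assms(1) unfolding simple_graph_def by (intro sum.cong) auto
    also have "\<dots> = z l * of_nat (card {k. E l k})"
      by (simp add: card_sum sum_distrib_left)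
    finally show "(\<Sum>k\<in>UNIV. if E k l then z l else 0) = z l * of_nat (card {k. E l k})" .
  qed simp
  also have "\<dots> = of_nat r * (\<Sum>l\<in>UNIV. z l)"
    using assms(2) by (simp add: regular_def sum_distrib_left mult.commute)
  finally show ?thesis .
qed

lemma prodL:
  fixes E1 :: "'a::finite \<Rightarrow> 'a \<Rightarrow> bool" and E2 :: "'b::finite \<Rightarrow> 'b \<Rightarrow> bool"
  assumes "regular E1 r1"
  shows "(sl_matrix (prod_graph E1 E2) *v v) $ Inl (i,k) =
     (of_nat CARD('b) * of_nat r1 + of_nat CARD('b)) * v $ Inl (i,k)
     + (\<Sum>j\<in>UNIV. if E1 i j then (\<Sum>l\<in>UNIV. v $ Inl (j,l)) else 0) + (\<Sum>q\<in>UNIV. v $ Inr (i,q))"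
proof -
  have c: "(of_nat (card {w. prod_graph E1 E2 (Inl (i,k)) w}) :: complex) = of_nat CARD('b) * of_nat r1 + of_nat CARD('b)"
  proof -
    have "(of_nat (card {w. prod_graph E1 E2 (Inl (i,k)) w}) :: complex)
       = (\<Sum>j\<in>UNIV. \<Sum>l\<in>(UNIV::'b set). if E1 i j then 1 else 0) + (\<Sum>j\<in>UNIV. \<Sum>l\<in>(UNIV::'b set). if i = j then 1 else 0)"
      by (simp add: card_sum[where 'v="('a\<times>'b)+('a\<times>'b)"] sum_plus_UNIV sum_prod_UNIV)
    also have "\<dots> = of_nat CARD('b) * of_nat (card {j. E1 i j}) + of_nat CARD('b)"
      by (simp add: card_sum[where 'v='a] sum_distrib_left) (simp add: sum_distrib_left[symmetric])
    finally show ?thesis using assms by (simp add: regular_def)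
  qed
  have s: "(\<Sum>w\<in>UNIV. if prod_graph E1 E2 (Inl (i,k)) w then v$w else 0)
     = (\<Sum>j\<in>UNIV. if E1 i j then (\<Sum>l\<in>UNIV. v $ Inl (j,l)) else 0) + (\<Sum>q\<in>UNIV. v $ Inr (i,q))"
    by (simp add: sum_plus_UNIV sum_prod_UNIV if_distrib sum.If_cases)
  show ?thesis by (simp add: sl_mult c s add.assoc)
qed

lemma prodR:
  fixes E1 :: "'a::finite \<Rightarrow> 'a \<Rightarrow> bool" and E2 :: "'b::finite \<Rightarrow> 'b \<Rightarrow> bool"
  assumes "regular E2 r2"
  shows "(sl_matrix (prod_graph E1 E2) *v v) $ Inr (i,k) =
     (of_nat CARD('b) + of_nat r2) * v $ Inr (i,k)
     + (\<Sum>p\<in>UNIV. v $ Inl (i,p)) + (\<Sum>l\<in>UNIV. if E2 k l then v $ Inr (i,l) else 0)"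
proof -
  have c: "(of_nat (card {w. prod_graph E1 E2 (Inr (i,k)) w}) :: complex) = of_nat CARD('b) + of_nat r2"
  proof -
    have "(of_nat (card {w. prod_graph E1 E2 (Inr (i,k)) w}) :: complex)
       = (\<Sum>j\<in>UNIV. \<Sum>l\<in>(UNIV::'b set). if j = i then 1 else 0) + (\<Sum>j\<in>UNIV. \<Sum>l\<in>(UNIV::'b set). if i = j \<and> E2 k l then 1 else 0)"
      unfolding card_sum[where 'v="('a\<times>'b)+('a\<times>'b)"] sum_plus_UNIV sum_prod_UNIV by simp
    also have "\<dots> = of_nat CARD('b) + (\<Sum>l\<in>(UNIV::'b set). if E2 k l then 1 else 0)"
    proof -
      have h1: "(\<Sum>j\<in>UNIV. \<Sum>l\<in>(UNIV::'b set). if j = i then (1::complex) else 0) = of_nat CARD('b)"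
        by simp (simp add: sum_distrib_left[symmetric])
      have h3: "(\<Sum>j\<in>UNIV. if i = j \<and> E2 k l then (1::complex) else 0) = (if E2 k l then 1 else 0)" for l
      proof -
        have "(\<Sum>j\<in>UNIV. if i = j \<and> E2 k l then (1::complex) else 0) = (\<Sum>j\<in>UNIV. if i = j then (if E2 k l then 1 else 0) else 0)"
          by (intro sum.cong) auto
        then show ?thesis by simp
      qed
      have h2: "(\<Sum>j\<in>UNIV. \<Sum>l\<in>(UNIV::'b set). if i = j \<and> E2 k l then (1::complex) else 0) = (\<Sum>l\<in>(UNIV::'b set). if E2 k l then 1 else 0)"
        by (subst sum.swap) (simp only: h3)
      show ?thesis by (simp only: h1 h2)
    qed
    finally show ?thesis using assms by (simp add: regular_def card_sum[symmetric])
  qed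
  have s: "(\<Sum>w\<in>UNIV. if prod_graph E1 E2 (Inr (i,k)) w then v$w else 0)
     = (\<Sum>p\<in>UNIV. v $ Inl (i,p)) + (\<Sum>l\<in>UNIV. if E2 k l then v $ Inr (i,l) else 0)"
  proof -
    have h: "(\<Sum>x\<in>UNIV. if i = x \<and> E2 k j then v $ Inr (x, j) else 0) = (if E2 k j then v $ Inr (i, j) else 0)" for j
    proof -
      have "(\<Sum>x\<in>UNIV. if i = x \<and> E2 k j then v $ Inr (x, j) else 0) = (\<Sum>x\<in>UNIV. if i = x then (if E2 k j then v $ Inr (x, j) else 0) else 0)"
        by (intro sum.cong) auto
      then show ?thesis by simp
    qed
    show ?thesis
      unfolding sum_plus_UNIV sum_prod_UNIV by (simp add: sum.swap[where A=UNIV and B="UNIV::'b set"]) (simp add: h)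
  qed
  show ?thesis by (simp add: sl_mult c s add.assoc)
qed

lemma reg_eig:
  fixes E :: "'v::finite \<Rightarrow> 'v \<Rightarrow> bool"
  assumes "regular E r"
  shows "sl_matrix E *v (\<chi> i. 1) = (2 * of_nat r) *s (\<chi> i. 1)"
proof -
  have "(sl_matrix E *v (\<chi> i. 1)) $ u = 2 * of_nat r" for u
  proof -
    show ?thesis using assms by (simp add: reg_mult regular_def) (simp only: vec_lambda_beta card_sum[symmetric])
  qed
  then show ?thesis by (simp add: vec_eq_iff)
qed

lemma reg_is_eig:
  fixes E :: "'v::finite \<Rightarrow> 'v \<Rightarrow> bool"
  assumes "regular E r"
  shows "is_eigenvalue (sl_matrix E) (2 * of_nat r)"
  unfolding is_eigenvalue_def using reg_eig[OF assms]
  by (intro exI[of _ "\<chi> i. 1"]) (auto simp: vec_eq_iff)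

lemma coronal_reg:
  fixes E :: "'v::finite \<Rightarrow> 'v \<Rightarrow> bool"
  assumes "regular E r" "\<not> is_eigenvalue (sl_matrix E) t"
  shows "coronal (sl_matrix E) t = of_nat CARD('v) / (t - 2 * of_nat r)"
proof -
  define M where "M = (\<chi> a b. if a = b then t else 0) - sl_matrix E"
  have D: "(\<chi> a b. if a = b then t else 0) *v z = t *s z" for z :: "complex^'v"
  proof -
    have "(\<Sum>j\<in>UNIV. (if i = j then t else 0) * z $ j) = t * z $ i" for i
    proof -
      have "(\<Sum>j\<in>UNIV. (if i = j then t else 0) * z $ j) = (\<Sum>j\<in>UNIV. if i = j then t * z $ j else 0)"
        by (intro sum.cong) auto
      then show ?thesis by simp
    qed
    then show ?thesis by (simp add: matrix_vector_mult_def vec_eq_iff)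
  qed
  have Mz: "M *v z = t *s z - sl_matrix E *v z" for z
    by (simp add: M_def matrix_vector_mult_diff_rdistrib D)
  have ker: "\<forall>z. M *v z = 0 \<longrightarrow> z = 0"
  proof (intro allI impI)
    fix z assume "M *v z = 0"
    then have "sl_matrix E *v z = t *s z" by (simp add: Mz)
    then show "z = 0" using assms(2) unfolding is_eigenvalue_def by blast
  qed
  then have "invertible M"
    by (simp add: invertible_left_inverse matrix_left_invertible_ker)
  then have inv: "matrix_inv M ** M = mat 1"
    unfolding invertible_def matrix_inv_def by (rule someI_ex[THEN conjunct2])
  have tne: "t - 2 * of_nat r \<noteq> 0"
    using assms(2) reg_is_eig[OF assms(1)] by auto
  define one :: "complex^'v" where "one = (\<chi> i. 1)"
  have M1: "M *v one = (t - 2 * of_nat r) *s one"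
    using reg_eig[OF assms(1)] by (simp add: Mz one_def vec_eq_iff algebra_simps)
  have "one = matrix_inv M *v (M *v one)"
    by (simp add: matrix_vector_mul_assoc inv)
  also have "\<dots> = (t - 2 * of_nat r) *s (matrix_inv M *v one)"
    by (simp only: M1 vector_scalar_commute)
  finally have Mi: "matrix_inv M *v one = (1 / (t - 2 * of_nat r)) *s one"
    using tne by (simp add: vec_eq_iff field_simps)
  have "coronal (sl_matrix E) t = (\<Sum>i\<in>UNIV. (matrix_inv M *v one) $ i)"
    unfolding coronal_def M_def[symmetric] by (simp add: matrix_vector_mult_def one_def)
  also have "\<dots> = of_nat CARD('v) / (t - 2 * of_nat r)"
    unfolding Mi unfolding one_def by (simp only: vector_scalar_mult_def vec_lambda_beta) simp
  finally show ?thesis .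
qed

lemma vec_sum_eqI:
  fixes x y :: "complex^(('a::finite\<times>'b::finite)+('a\<times>'b))"
  assumes "\<And>i k. x $ Inl (i,k) = y $ Inl (i,k)" "\<And>i k. x $ Inr (i,k) = y $ Inr (i,k)"
  shows "x = y"
proof -
  have "x $ w = y $ w" for w
    using assms by (cases w) auto
  then show ?thesis by (simp add: vec_eq_iff)
qed

lemma sum_if_mult: "(\<Sum>j\<in>A. if P j then (a::complex) * f j else 0) = a * (\<Sum>j\<in>A. if P j then f j else 0)"
  by (simp add: sum_distrib_left if_distrib cong: if_cong)

lemma sum_if_const:
  fixes E :: "'v::finite \<Rightarrow> 'v \<Rightarrow> bool"
  assumes "regular E r"
  shows "(\<Sum>l\<in>UNIV. if E k l then (a::complex) else 0) = of_nat r * a"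
proof -
  have "(\<Sum>l\<in>UNIV. if E k l then (a::complex) else 0) = (\<Sum>l\<in>UNIV. if E k l then a * 1 else 0)" by (simp only: mult_1_right)
  also have "\<dots> = a * of_nat (card {l. E k l})" by (simp only: sum_if_mult card_sum)
  finally show ?thesis using assms by (simp add: regular_def mult.commute)
qed

lemma partA:
  fixes E1 :: "'a::finite \<Rightarrow> 'a \<Rightarrow> bool" and E2 :: "'b::finite \<Rightarrow> 'b \<Rightarrow> bool"
  assumes "simple_graph E2" "regular E2 r2" "sl_integral (prod_graph E1 E2)" "regular E1 r1"
  shows "sl_integral E2"
  unfolding sl_integral_def
proof (intro allI impI)
  fix \<mu> assume "is_eigenvalue (sl_matrix E2) \<mu>"
  then obtain z where z0: "z \<noteq> 0" and zE: "sl_matrix E2 *v z = \<mu> *s z"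
    unfolding is_eigenvalue_def by blast
  have zk: "of_nat r2 * z $ k + (\<Sum>l\<in>UNIV. if E2 k l then z $ l else 0) = \<mu> * z $ k" for k
    using arg_cong[OF zE, of "\<lambda>u. u $ k"] by (simp add: reg_mult[OF assms(2)])
  show "\<mu> \<in> \<int>"
  proof (cases "(\<Sum>l\<in>UNIV. z $ l) = 0")
    case True
    define v :: "complex^(('a\<times>'b)+('a\<times>'b))" where
      "v = (\<chi> w. case w of Inl p \<Rightarrow> 0 | Inr p \<Rightarrow> z $ snd p)"
    have vl: "v $ Inl p = 0" for p by (simp add: v_def)
    have vr: "v $ Inr (i,k) = z $ k" for i k by (simp add: v_def)
    have "sl_matrix (prod_graph E1 E2) *v v = (of_nat CARD('b) + \<mu>) *s v"
    proof (rule vec_sum_eqI)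
      fix i k
      show "(sl_matrix (prod_graph E1 E2) *v v) $ Inl (i,k) = ((of_nat CARD('b) + \<mu>) *s v) $ Inl (i,k)"
        using True by (simp add: prodL[OF assms(4)] vl vr cong: if_cong)
    next
      fix i k
      show "(sl_matrix (prod_graph E1 E2) *v v) $ Inr (i,k) = ((of_nat CARD('b) + \<mu>) *s v) $ Inr (i,k)"
        using zk[of k] by (simp add: prodR[OF assms(2)] vl vr algebra_simps cong: if_cong)
    qed
    moreover have "v \<noteq> 0"
    proof
      assume "v = 0"
      then have "z $ k = 0" for k using vr[of undefined k] by simp
      then show False using z0 by (simp add: vec_eq_iff)
    qed
    ultimately have "of_nat CARD('b) + \<mu> \<in> \<int>"
      using assms(3) unfolding sl_integral_def is_eigenvalue_def by blast
    then have "(of_nat CARD('b) + \<mu>) - of_nat CARD('b) \<in> \<int>" by (intro Ints_diff) auto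
    then show ?thesis by simp
  next
    case False
    have "(\<Sum>k\<in>UNIV. of_nat r2 * z $ k + (\<Sum>l\<in>UNIV. if E2 k l then z $ l else 0)) = (\<Sum>k\<in>UNIV. \<mu> * z $ k)"
      using zk by simp
    then have "2 * of_nat r2 * (\<Sum>l\<in>UNIV. z $ l) = \<mu> * (\<Sum>l\<in>UNIV. z $ l)"
      by (simp add: sum.distrib sym_sum[OF assms(1,2)] sum_distrib_left[symmetric] algebra_simps)
    then have "\<mu> = 2 * of_nat r2" using False by simp
    then show ?thesis by simp
  qed
qed

lemma not_eig_of_not_Ints:
  assumes "sl_integral E" "y \<notin> \<int>"
  shows "\<not> is_eigenvalue (sl_matrix E) (y - of_nat n)"
proof
  assume "is_eigenvalue (sl_matrix E) (y - of_nat n)"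
  then have "y - of_nat n \<in> \<int>" using assms(1) unfolding sl_integral_def by blast
  then have "(y - of_nat n) + of_nat n \<in> \<int>" by (intro Ints_add) auto
  then show False using assms(2) by simp
qed

lemma partB:
  fixes E1 :: "'a::finite \<Rightarrow> 'a \<Rightarrow> bool" and E2 :: "'b::finite \<Rightarrow> 'b \<Rightarrow> bool"
  assumes "regular E1 r1" "regular E2 r2"
    and "sl_integral (prod_graph E1 E2)" "sl_integral E2" "is_eigenvalue (sl_matrix E1) \<nu>"
    and rt: "rat_root (\<lambda>y. y - of_nat CARD('b) - of_nat CARD('b) * \<nu>
                 - of_nat CARD('b) * coronal (sl_matrix E2) (y - of_nat CARD('b))) x"
  shows "x \<in> \<int>"
proof -
  define N :: complex where "N = of_nat CARD('b)"
  have N0: "N \<noteq> 0" by (simp add: N_def)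
  define F where "F = (\<lambda>y. y - N - N * \<nu> - N * coronal (sl_matrix E2) (y - N))"
  have rr: "(F \<longlongrightarrow> 0) (at x)" using rt unfolding rat_root_def F_def N_def .
  define q where "q = (\<lambda>y. (y - N - N * \<nu>) * (y - N - 2 * of_nat r2) - N * N)"
  have ev: "eventually (\<lambda>y. F y * (y - N - 2 * of_nat r2) = q y) (at x)"
    using eventually_not_Ints[of x]
  proof eventually_elim
    case (elim y)
    have ne: "\<not> is_eigenvalue (sl_matrix E2) (y - N)"
      using not_eig_of_not_Ints[OF assms(4) elim] by (simp add: N_def)
    have "y - N - 2 * of_nat r2 \<noteq> 0"
    proof
      assume "y - N - 2 * of_nat r2 = 0"
      then have "y = N + 2 * of_nat r2" by (simp add: algebra_simps)
      then show False using elim by (simp add: N_def)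
    qed
    then show ?case
      using coronal_reg[OF assms(2) ne] unfolding F_def q_def N_def
      by (simp add: field_simps)
  qed
  have "((\<lambda>y. F y * (y - N - 2 * of_nat r2)) \<longlongrightarrow> 0 * (x - N - 2 * of_nat r2)) (at x)"
    by (intro tendsto_intros rr)
  then have l0: "(q \<longlongrightarrow> 0) (at x)"
    using ev by (simp add: tendsto_cong)
  have l1: "(q \<longlongrightarrow> q x) (at x)"
    unfolding q_def by (intro tendsto_intros)
  have qx: "q x = 0"
    using tendsto_unique[OF _ l1 l0] by simp
  obtain c where c0: "c \<noteq> 0" and cE: "sl_matrix E1 *v c = \<nu> *s c"
    using assms(5) unfolding is_eigenvalue_def by blast
  have S: "(\<Sum>j\<in>UNIV. if E1 i j then c $ j else 0) = (\<nu> - of_nat r1) * c $ i" for i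
    using arg_cong[OF cE, of "\<lambda>u. u $ i"] by (simp add: reg_mult[OF assms(1)] algebra_simps)
  define \<alpha> where "\<alpha> = x - 2 * of_nat r2 - N"
  define v :: "complex^(('a\<times>'b)+('a\<times>'b))" where
    "v = (\<chi> w. case w of Inl p \<Rightarrow> \<alpha> * c $ fst p | Inr p \<Rightarrow> N * c $ fst p)"
  have vl: "v $ Inl (i,k) = \<alpha> * c $ i" for i k by (simp add: v_def)
  have vr: "v $ Inr (i,k) = N * c $ i" for i k by (simp add: v_def)
  have "sl_matrix (prod_graph E1 E2) *v v = x *s v"
  proof (rule vec_sum_eqI)
    fix i k
    have "(sl_matrix (prod_graph E1 E2) *v v) $ Inl (i,k) =
       (N * of_nat r1 + N) * (\<alpha> * c $ i) + N * (\<alpha> * (\<Sum>j\<in>UNIV. if E1 i j then c $ j else 0)) + N * (N * c $ i)"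
      by (simp add: prodL[OF assms(1)] vl vr sum_if_mult N_def cong: if_cong)
    also have "\<dots> = x * (\<alpha> * c $ i)"
      using qx unfolding S q_def \<alpha>_def by algebra
    finally show "(sl_matrix (prod_graph E1 E2) *v v) $ Inl (i,k) = (x *s v) $ Inl (i,k)"
      by (simp add: vl)
  next
    fix i k
    have "(sl_matrix (prod_graph E1 E2) *v v) $ Inr (i,k) =
       (N + of_nat r2) * (N * c $ i) + N * (\<alpha> * c $ i) + of_nat r2 * (N * c $ i)"
      by (simp add: prodR[OF assms(2)] vl vr sum_if_const[OF assms(2)] N_def cong: if_cong)
    also have "\<dots> = x * (N * c $ i)"
      unfolding \<alpha>_def by algebra
    finally show "(sl_matrix (prod_graph E1 E2) *v v) $ Inr (i,k) = (x *s v) $ Inr (i,k)"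
      by (simp add: vr)
  qed
  moreover have "v \<noteq> 0"
  proof
    assume "v = 0"
    then have "N * c $ i = 0" for i using vr[of i undefined] by simp
    then show False using c0 N0 by (simp add: vec_eq_iff)
  qed
  ultimately show ?thesis
    using assms(3) unfolding sl_integral_def is_eigenvalue_def by blast
qed

lemma partC:
  fixes E1 :: "'a::finite \<Rightarrow> 'a \<Rightarrow> bool" and E2 :: "'b::finite \<Rightarrow> 'b \<Rightarrow> bool"
  assumes "regular E1 r1" "simple_graph E2" "regular E2 r2" "sl_integral E2"
    and H: "\<forall>\<nu>. is_eigenvalue (sl_matrix E1) \<nu> \<longrightarrow>
        (\<forall>x. rat_root (\<lambda>y. y - of_nat CARD('b) - of_nat CARD('b) * \<nu>
                 - of_nat CARD('b) * coronal (sl_matrix E2) (y - of_nat CARD('b))) x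
             \<longrightarrow> x \<in> \<int>)"
  shows "sl_integral (prod_graph E1 E2)"
  unfolding sl_integral_def
proof (intro allI impI)
  fix lam assume "is_eigenvalue (sl_matrix (prod_graph E1 E2)) lam"
  then obtain v where v0: "v \<noteq> 0" and vE: "sl_matrix (prod_graph E1 E2) *v v = lam *s v"
    unfolding is_eigenvalue_def by blast
  define N :: complex where "N = of_nat CARD('b)"
  have N0: "N \<noteq> 0" by (simp add: N_def)
  define a where "a i k = v $ Inl (i,k)" for i k
  define b where "b i k = v $ Inr (i,k)" for i k
  define R where "R i = (\<Sum>j\<in>UNIV. if E1 i j then (\<Sum>l\<in>UNIV. a j l) else 0) + (\<Sum>q\<in>UNIV. b i q)" for i
  have eqL: "(N * of_nat r1 + N) * a i k + R i = lam * a i k" for i k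
    using arg_cong[OF vE, of "\<lambda>u. u $ Inl (i,k)"]
    by (simp add: prodL[OF assms(1)] a_def b_def R_def N_def add.assoc cong: if_cong)
  have eqR: "(N + of_nat r2) * b i k + (\<Sum>p\<in>UNIV. a i p) + (\<Sum>l\<in>UNIV. if E2 k l then b i l else 0) = lam * b i k" for i k
    using arg_cong[OF vE, of "\<lambda>u. u $ Inr (i,k)"]
    by (simp add: prodR[OF assms(3)] a_def b_def N_def cong: if_cong)
  show "lam \<in> \<int>"
  proof (cases "lam = N * of_nat r1 + N \<or> is_eigenvalue (sl_matrix E2) (lam - N)")
    case True
    then show ?thesis
    proof
      assume "lam = N * of_nat r1 + N"
      then show ?thesis by (simp add: N_def)
    next
      assume "is_eigenvalue (sl_matrix E2) (lam - N)"
      then have "lam - N \<in> \<int>" using assms(4) unfolding sl_integral_def by blast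
      then have "(lam - N) + N \<in> \<int>" by (intro Ints_add) (auto simp: N_def)
      then show ?thesis by simp
    qed
  next
    case False
    define D where "D = lam - N * of_nat r1 - N"
    have D0: "D \<noteq> 0" using False by (auto simp: D_def algebra_simps)
    define e where "e = lam - N - 2 * of_nat r2"
    have e0: "e \<noteq> 0"
    proof
      assume "e = 0"
      then have "lam - N = 2 * of_nat r2" by (simp add: e_def algebra_simps)
      then show False using False reg_is_eig[OF assms(3)] by simp
    qed
    define c where "c i = R i / D" for i
    have ac: "a i k = c i" for i k
      using eqL[of i k] D0 unfolding c_def D_def by (simp add: field_simps)
    have SA: "(\<Sum>p\<in>UNIV. a i p) = N * c i" for i
      by (simp add: ac N_def)
    define d where "d i = N * c i / e" for i
    have de: "d i * e = N * c i" for i using e0 by (simp add: d_def)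
    have bd: "b i k = d i" for i k
    proof -
      define z :: "complex^'b" where "z = (\<chi> k. b i k - d i)"
      have "sl_matrix E2 *v z = (lam - N) *s z"
      proof -
        have "(sl_matrix E2 *v z) $ k = (lam - N) * z $ k" for k
        proof -
          have s1: "(\<Sum>l\<in>UNIV. if E2 k l then z $ l else 0) = (\<Sum>l\<in>UNIV. if E2 k l then b i l else 0) - of_nat r2 * d i"
          proof -
            have "(\<Sum>l\<in>UNIV. if E2 k l then z $ l else 0) = (\<Sum>l\<in>UNIV. (if E2 k l then b i l else 0) - (if E2 k l then d i else 0))"
              by (intro sum.cong) (auto simp: z_def)
            also have "\<dots> = (\<Sum>l\<in>UNIV. if E2 k l then b i l else 0) - of_nat r2 * d i"
              by (simp add: sum_subtractf sum_if_const[OF assms(3)])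
            finally show ?thesis .
          qed
          have "(sl_matrix E2 *v z) $ k = of_nat r2 * (b i k - d i) + ((\<Sum>l\<in>UNIV. if E2 k l then b i l else 0) - of_nat r2 * d i)"
            by (simp only: reg_mult[OF assms(3)] s1) (simp add: z_def)
          also have "\<dots> = (lam - N) * (b i k - d i)"
            using eqR[of i k] de[of i] unfolding SA e_def by algebra
          finally show ?thesis by (simp add: z_def)
        qed
        then show ?thesis by (simp add: vec_eq_iff algebra_simps)
      qed
      moreover have "\<not> is_eigenvalue (sl_matrix E2) (lam - N)" using False by simp
      ultimately have "z = 0" unfolding is_eigenvalue_def by blast
      then show ?thesis by (simp add: z_def vec_eq_iff)
    qed
    define S where "S i = (\<Sum>j\<in>UNIV. if E1 i j then c j else 0)" for i
    have RS: "R i = N * S i + N * d i" for i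
      unfolding R_def S_def by (simp add: SA bd sum_if_mult N_def cong: if_cong)
    define \<theta> where "\<theta> = (D - N * N / e) / N"
    have Sc: "S i = \<theta> * c i" for i
    proof -
      have "D * c i = N * S i + N * d i" using D0 by (simp add: c_def RS)
      then show ?thesis using N0 e0 unfolding \<theta>_def d_def by (simp add: field_simps)
    qed
    define cv :: "complex^'a" where "cv = (\<chi> i. c i)"
    have "sl_matrix E1 *v cv = (of_nat r1 + \<theta>) *s cv"
    proof -
      have "(sl_matrix E1 *v cv) $ i = (of_nat r1 + \<theta>) * cv $ i" for i
        using Sc[of i] unfolding S_def by (simp add: reg_mult[OF assms(1)] cv_def algebra_simps cong: if_cong)
      then show ?thesis by (simp add: vec_eq_iff algebra_simps)
    qed
    moreover have "cv \<noteq> 0"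
    proof
      assume "cv = 0"
      then have c0: "c i = 0" for i by (simp add: cv_def vec_eq_iff)
      have "v = 0"
      proof (rule vec_sum_eqI)
        fix i k
        show "v $ Inl (i,k) = 0 $ Inl (i,k)" using ac[of i k] c0[of i] by (simp add: a_def)
        show "v $ Inr (i,k) = 0 $ Inr (i,k)" using bd[of i k] c0[of i] by (simp add: b_def d_def)
      qed
      then show False using v0 by simp
    qed
    ultimately have ev1: "is_eigenvalue (sl_matrix E1) (of_nat r1 + \<theta>)"
      unfolding is_eigenvalue_def by blast
    define \<nu> where "\<nu> = of_nat r1 + \<theta>"
    define F where "F = (\<lambda>y. y - N - N * \<nu> - N * coronal (sl_matrix E2) (y - N))"
    define g where "g = (\<lambda>y. y - N - N * \<nu> - N * (N / (y - N - 2 * of_nat r2)))"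
    have evF: "eventually (\<lambda>y. g y = F y) (at lam)"
      using eventually_not_Ints[of lam]
    proof eventually_elim
      case (elim y)
      have ne: "\<not> is_eigenvalue (sl_matrix E2) (y - N)"
        using not_eig_of_not_Ints[OF assms(4) elim] by (simp add: N_def)
      show ?case
        using coronal_reg[OF assms(3) ne] unfolding F_def g_def N_def by simp
    qed
    have "(g \<longlongrightarrow> g lam) (at lam)"
      unfolding g_def using e0 unfolding e_def by (intro tendsto_intros) auto
    moreover have "g lam = 0"
      using N0 e0 unfolding g_def \<nu>_def \<theta>_def D_def e_def[symmetric] by (simp add: field_simps)
    ultimately have "(F \<longlongrightarrow> 0) (at lam)"
      using evF by (simp add: tendsto_cong)
    then have "rat_root (\<lambda>y. y - of_nat CARD('b) - of_nat CARD('b) * \<nu>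
                 - of_nat CARD('b) * coronal (sl_matrix E2) (y - of_nat CARD('b))) lam"
      unfolding rat_root_def F_def N_def .
    then show ?thesis using H ev1 unfolding \<nu>_def by blast
  qed
qed

theorem theorem7:
  fixes E1 :: "'a::finite \<Rightarrow> 'a \<Rightarrow> bool" and E2 :: "'b::finite \<Rightarrow> 'b \<Rightarrow> bool"
    and r1 r2 :: nat
  assumes "simple_graph E1" and "regular E1 r1"
    and "simple_graph E2" and "regular E2 r2"
  shows "sl_integral (prod_graph E1 E2) \<longleftrightarrow>
    (sl_integral E2 \<and>
     (\<forall>\<nu>. is_eigenvalue (sl_matrix E1) \<nu> \<longrightarrow>
        (\<forall>x. rat_root (\<lambda>y. y - of_nat CARD('b) - of_nat CARD('b) * \<nu>
                 - of_nat CARD('b) * coronal (sl_matrix E2) (y - of_nat CARD('b))) x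
             \<longrightarrow> x \<in> \<int>)))"
proof
  assume P: "sl_integral (prod_graph E1 E2)"
  have I2: "sl_integral E2" using partA[OF assms(3,4) P assms(2)] .
  show "sl_integral E2 \<and>
     (\<forall>\<nu>. is_eigenvalue (sl_matrix E1) \<nu> \<longrightarrow>
        (\<forall>x. rat_root (\<lambda>y. y - of_nat CARD('b) - of_nat CARD('b) * \<nu>
                 - of_nat CARD('b) * coronal (sl_matrix E2) (y - of_nat CARD('b))) x
             \<longrightarrow> x \<in> \<int>))"
    using I2 partB[OF assms(2,4) P I2] by blast
next
  assume "sl_integral E2 \<and>
     (\<forall>\<nu>. is_eigenvalue (sl_matrix E1) \<nu> \<longrightarrow>
        (\<forall>x. rat_root (\<lambda>y. y - of_nat CARD('b) - of_nat CARD('b) * \<nu>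
                 - of_nat CARD('b) * coronal (sl_matrix E2) (y - of_nat CARD('b))) x
             \<longrightarrow> x \<in> \<int>))"
  then show "sl_integral (prod_graph E1 E2)"
    using partC[OF assms(2,3,4)] by blast
qed

end
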